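(* Let $C_0,C_1,C_2,\dots$ be the successive configurations of the weakly universal Turing machine WUTM(2,4) (defined in the context) started from a configuration $C_0$ whose tape is a weak tape $\dots w_lw_l\,\alpha_0\,x_0\,\beta_0\,w_rw_r\dots$. Let $M_0$ be a marking of UPN(14,29) that represents $C_0$. Then the run of UPN(14,29) from $M_0$ never halts, and there are indices $0=n_0<n_1<n_2<\cdots$ such that for every $k\ge 0$ the marking reached after $n_k$ firings represents $C_k$ (possibly after the insertion transitions $t_1$ or $t_2$ have fired). Moreover, for fixed $M_0$, $n_k=O(k\cdot 5^{k})$, and every place's marking during the first $n_k$ firings has $O(k)$ base-5 digits (space $O(k)$).
   Context: A deterministic inhibitor Petri net (DIPN) has places $p_1,\dots,p_m$ holding nonnegative integer numbers of tokens (the marking) and transitions $t_1,\dots,t_n$. Each pair (place $p$, transition $t$) carries an input value $w^-\in\{0,1,2,\dots\}\cup\{-1\}$ and an output value $w^+\ge 0$. Transition $t$ is firable iff every place with input value $w^->0$ holds at least $w^-$ tokens and every place with input value $-1$ (inhibitor arc) holds $0$ tokens. At each step the firable transition with the smallest index fires: it removes $w^-$ tokens from each place with $w^->0$ and adds $w^+$ tokens to each place (inhibitor arcs remove nothing). The net halts when no transition is firable. UPN(14,29) has places $p_1=X$, $p_2=U$, $p_3=L$, $p_4=R$, $p_5=\mathit{STEP}$, $p_6=\mathit{MOVE}$, $p_7=\mathit{RIGHT}$, $p_8=\mathit{MOVE1}$, $p_9,\dots,p_{14}$, and 29 transitions. Below, "$P\,a,b$" means input value $a$ and output value $b$ for place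 $P$; unlisted places have $0,0$. $t_1$: $L\,{-1},167$; $\mathit{STEP}\,1,1$. $t_2$: $R\,{-1},13596$; $\mathit{STEP}\,1,1$. $t_3$: $X\,4,2$; $U\,1,1$; $\mathit{STEP}\,1,0$; $\mathit{MOVE}\,0,1$; $\mathit{RIGHT}\,0,1$. $t_4$: $X\,4,4$; $\mathit{STEP}\,1,0$; $\mathit{MOVE}\,0,1$. $t_5$: $X\,3,1$; $U\,1,1$; $\mathit{STEP}\,1,0$; $\mathit{MOVE}\,0,1$; $\mathit{RIGHT}\,0,1$. $t_6$: $X\,3,4$; $\mathit{STEP}\,1,0$; $\mathit{MOVE}\,0,1$. $t_7$: $X\,2,3$; $U\,1,1$; $\mathit{STEP}\,1,0$; $\mathit{MOVE}\,0,1$. $t_8$: $X\,2,4$; $U\,0,1$; $\mathit{STEP}\,1,0$; $\mathit{MOVE}\,0,1$. $t_9$: $X\,1,4$; $U\,1,0$; $\mathit{STEP}\,1,0$; $\mathit{MOVE}\,0,1$; $\mathit{RIGHT}\,0,1$. $t_{10}$: $X\,1,3$; $\mathit{STEP}\,1,0$; $\mathit{MOVE}\,0,1$. $t_{11}$: $R\,1,0$; $\mathit{MOVE}\,1,1$; $\mathit{RIGHT}\,{-1},0$; $p_9\,0,5$. $t_{12}$: $L\,1,0$; $\mathit{MOVE}\,1,1$; $\mathit{RIGHT}\,1,1$; $p_9\,0,5$. $t_{13}$: $\mathit{MOVE}\,1,0$; $p_{10}\,0,1$. $t_{14}$: $R\,0,1$; $\mathit{RIGHT}\,{-1},0$; $p_9\,1,0$;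 $p_{10}\,1,1$. $t_{15}$: $L\,0,1$; $\mathit{RIGHT}\,1,1$; $p_9\,1,0$; $p_{10}\,1,1$. $t_{16}$: $p_{10}\,1,0$; $p_{11}\,0,1$. $t_{17}$: $X\,1,0$; $R\,0,1$; $\mathit{RIGHT}\,{-1},0$; $p_{11}\,1,1$. $t_{18}$: $X\,1,0$; $L\,0,1$; $\mathit{RIGHT}\,1,1$; $p_{11}\,1,1$. $t_{19}$: $\mathit{MOVE1}\,0,1$; $p_{11}\,1,0$. $t_{20}$: $R\,5,0$; $\mathit{RIGHT}\,1,1$; $\mathit{MOVE1}\,1,1$; $p_{14}\,0,1$. $t_{21}$: $L\,5,0$; $\mathit{RIGHT}\,{-1},0$; $\mathit{MOVE1}\,1,1$; $p_{14}\,0,1$. $t_{22}$: $\mathit{MOVE1}\,1,0$; $p_{12}\,0,1$. $t_{23}$: $X\,0,1$; $R\,1,0$; $\mathit{RIGHT}\,1,1$; $p_{12}\,1,1$. $t_{24}$: $X\,0,1$; $L\,1,0$; $\mathit{RIGHT}\,{-1},0$; $p_{12}\,1,1$. $t_{25}$: $p_{12}\,1,0$; $p_{13}\,0,1$. $t_{26}$: $R\,0,1$; $\mathit{RIGHT}\,1,1$; $p_{13}\,1,1$; $p_{14}\,1,0$. $t_{27}$: $L\,0,1$; $\mathit{RIGHT}\,{-1},0$; $p_{13}\,1,1$; $p_{14}\,1,0$. $t_{28}$: $\mathit{STEP}\,0,1$; $\mathit{RIGHT}\,1,0$; $p_{13}\,1,0$. $t_{29}$: $\mathit{STEP}\,0,1$;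 $p_{13}\,1,0$. WUTM(2,4) (Neary–Woods) has states $u_1,u_2$ with codes $s(u_1)=0$, $s(u_2)=1$, start state $u_1$, and tape alphabet $\Sigma=\{0,1,\bar 0,\bar 1\}$ with codes $s(0)=1$, $s(1)=2$, $s(\bar0)=3$, $s(\bar1)=4$. Its instructions (scanned symbol, state) $\mapsto$ (written symbol, move, new state) are: $(0,u_1)\mapsto(\bar0,\text{left},u_1)$; $(0,u_2)\mapsto(\bar1,\text{right},u_1)$; $(1,u_1)\mapsto(\bar1,\text{left},u_2)$; $(1,u_2)\mapsto(\bar0,\text{left},u_2)$; $(\bar0,u_1)\mapsto(\bar1,\text{left},u_1)$; $(\bar0,u_2)\mapsto(0,\text{right},u_2)$; $(\bar1,u_1)\mapsto(\bar1,\text{left},u_1)$; $(\bar1,u_2)\mapsto(1,\text{right},u_2)$. It has no halting state (every pair is defined). For a finite word $\alpha=y_1\cdots y_m$ (leftmost $y_1$) set $\lambda(\alpha)=\sum_{i=1}^m s(y_i)5^{m-i}$ and for $\beta=z_1\cdots z_n$ set $\rho(\beta)=\sum_{i=1}^n s(z_i)5^{i-1}$; empty words have code $0$. The blank words are $w_l=0\,0\,\bar0\,1$ (repeated infinitely to the left; $\lambda(w_l)=167$) and $w_r=0\,\bar1\,\bar0\,\bar0\,0\,\bar1$ (repeated infinitely to the right; $\rho(w_r)=13596$). A weak tape is a bi-infinite tape $\dots w_lw_l\,\alpha\,x\,\beta\,w_rw_r\dots$ with $\alpha,\beta$ finite and $x$ the scanned cell. A marking represents the configuration (state $u$, such a tape)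 if, for some such decomposition, $U=s(u)$, $X=s(x)$, $L=\lambda(\alpha)$, $R=\rho(\beta)$, $\mathit{STEP}=1$, and $\mathit{MOVE}=\mathit{RIGHT}=\mathit{MOVE1}=p_9=\dots=p_{14}=0$. *)

theory Defs
  imports Main
begin

text \<open>A transition is given by its input values (an integer, -1 meaning an inhibitor
  arc) and its output values, per place.\<close>

type_synonym marking = "nat \<Rightarrow> nat"
type_synonym transition = "(nat \<Rightarrow> int) \<times> (nat \<Rightarrow> nat)"

definition t_in :: "transition \<Rightarrow> nat \<Rightarrow> int" where "t_in t = fst t"
definition t_out :: "transition \<Rightarrow> nat \<Rightarrow> nat" where "t_out t = snd t"

definition firable :: "nat set \<Rightarrow> transition \<Rightarrow> marking \<Rightarrow> bool" where
  "firable P t M \<longleftrightarrow>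
     (\<forall>p\<in>P. (t_in t p > 0 \<longrightarrow> int (M p) \<ge> t_in t p) \<and> (t_in t p = -1 \<longrightarrow> M p = 0))"

definition fire :: "nat set \<Rightarrow> transition \<Rightarrow> marking \<Rightarrow> marking" where
  "fire P t M = (\<lambda>p. if p \<in> P
      then M p - (if t_in t p > 0 then nat (t_in t p) else 0) + t_out t p
      else M p)"

text \<open>One step: the firable transition with smallest index fires; None = halted.\<close>
definition dipn_step :: "nat set \<Rightarrow> transition list \<Rightarrow> marking \<Rightarrow> marking option" where
  "dipn_step P N M = (case find (\<lambda>t. firable P t M) N of
       None \<Rightarrow> None | Some t \<Rightarrow> Some (fire P t M))"

fun dipn_run :: "nat set \<Rightarrow> transition list \<Rightarrow> marking \<Rightarrow> nat \<Rightarrow> marking option" where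
  "dipn_run P N M 0 = Some M"
| "dipn_run P N M (Suc k) = (case dipn_run P N M k of None \<Rightarrow> None | Some M' \<Rightarrow> dipn_step P N M')"

definition mk_tr :: "(nat \<times> int \<times> nat) list \<Rightarrow> transition" where
  "mk_tr xs = ((\<lambda>p. case map_of xs p of None \<Rightarrow> 0 | Some ab \<Rightarrow> fst ab),
               (\<lambda>p. case map_of xs p of None \<Rightarrow> 0 | Some ab \<Rightarrow> snd ab))"

definition pX :: nat where "pX = 1"
definition pU :: nat where "pU = 2"
definition pL :: nat where "pL = 3"
definition pR :: nat where "pR = 4"
definition pSTEP :: nat where "pSTEP = 5"
definition pMOVE :: nat where "pMOVE = 6"
definition pRIGHT :: nat where "pRIGHT = 7"
definition pMOVE1 :: nat where "pMOVE1 = 8"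

definition upn_places :: "nat set" where "upn_places = {1..14}"

definition UPN :: "transition list" where
  "UPN = map mk_tr [
    [(pL,-1,167),(pSTEP,1,1)],
    [(pR,-1,13596),(pSTEP,1,1)],
    [(pX,4,2),(pU,1,1),(pSTEP,1,0),(pMOVE,0,1),(pRIGHT,0,1)],
    [(pX,4,4),(pSTEP,1,0),(pMOVE,0,1)],
    [(pX,3,1),(pU,1,1),(pSTEP,1,0),(pMOVE,0,1),(pRIGHT,0,1)],
    [(pX,3,4),(pSTEP,1,0),(pMOVE,0,1)],
    [(pX,2,3),(pU,1,1),(pSTEP,1,0),(pMOVE,0,1)],
    [(pX,2,4),(pU,0,1),(pSTEP,1,0),(pMOVE,0,1)],
    [(pX,1,4),(pU,1,0),(pSTEP,1,0),(pMOVE,0,1),(pRIGHT,0,1)],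
    [(pX,1,3),(pSTEP,1,0),(pMOVE,0,1)],
    [(pR,1,0),(pMOVE,1,1),(pRIGHT,-1,0),(9,0,5)],
    [(pL,1,0),(pMOVE,1,1),(pRIGHT,1,1),(9,0,5)],
    [(pMOVE,1,0),(10,0,1)],
    [(pR,0,1),(pRIGHT,-1,0),(9,1,0),(10,1,1)],
    [(pL,0,1),(pRIGHT,1,1),(9,1,0),(10,1,1)],
    [(10,1,0),(11,0,1)],
    [(pX,1,0),(pR,0,1),(pRIGHT,-1,0),(11,1,1)],
    [(pX,1,0),(pL,0,1),(pRIGHT,1,1),(11,1,1)],
    [(pMOVE1,0,1),(11,1,0)],
    [(pR,5,0),(pRIGHT,1,1),(pMOVE1,1,1),(14,0,1)],
    [(pL,5,0),(pRIGHT,-1,0),(pMOVE1,1,1),(14,0,1)],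
    [(pMOVE1,1,0),(12,0,1)],
    [(pX,0,1),(pR,1,0),(pRIGHT,1,1),(12,1,1)],
    [(pX,0,1),(pL,1,0),(pRIGHT,-1,0),(12,1,1)],
    [(12,1,0),(13,0,1)],
    [(pR,0,1),(pRIGHT,1,1),(13,1,1),(14,1,0)],
    [(pL,0,1),(pRIGHT,-1,0),(13,1,1),(14,1,0)],
    [(pSTEP,0,1),(pRIGHT,1,0),(13,1,0)],
    [(pSTEP,0,1),(13,1,0)]]"

datatype state = u1 | u2
datatype sym = S0 | S1 | S0b | S1b   \<comment> \<open>0, 1, 0-bar, 1-bar\<close>
datatype dir = Lft | Rgt

definition scode :: "state \<Rightarrow> nat" where
  "scode u = (case u of u1 \<Rightarrow> 0 | u2 \<Rightarrow> 1)"

definition ycode :: "sym \<Rightarrow> nat" where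
  "ycode y = (case y of S0 \<Rightarrow> 1 | S1 \<Rightarrow> 2 | S0b \<Rightarrow> 3 | S1b \<Rightarrow> 4)"

fun delta :: "sym \<Rightarrow> state \<Rightarrow> sym \<times> dir \<times> state" where
  "delta S0 u1 = (S0b, Lft, u1)"
| "delta S0 u2 = (S1b, Rgt, u1)"
| "delta S1 u1 = (S1b, Lft, u2)"
| "delta S1 u2 = (S0b, Lft, u2)"
| "delta S0b u1 = (S1b, Lft, u1)"
| "delta S0b u2 = (S0, Rgt, u2)"
| "delta S1b u1 = (S1b, Lft, u1)"
| "delta S1b u2 = (S1, Rgt, u2)"

type_synonym config = "state \<times> (int \<Rightarrow> sym) \<times> int"

fun tm_step :: "config \<Rightarrow> config" where
  "tm_step (u, T, h) = (case delta (T h) u of (w, d, u') \<Rightarrow>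
      (u', T(h := w), if d = Rgt then h + 1 else h - 1))"

definition w_l :: "sym list" where "w_l = [S0, S0, S0b, S1]"
definition w_r :: "sym list" where "w_r = [S0, S1b, S0b, S0b, S0, S1b]"

definition lam :: "sym list \<Rightarrow> nat" where
  "lam \<alpha> = (\<Sum>i<length \<alpha>. ycode (\<alpha> ! i) * 5 ^ (length \<alpha> - 1 - i))"

definition rho :: "sym list \<Rightarrow> nat" where
  "rho \<beta> = (\<Sum>i<length \<beta>. ycode (\<beta> ! i) * 5 ^ i)"

text \<open>The tape T with head at h is ... w_l w_l alpha x beta w_r w_r ...\<close>
definition weak_decomp :: "(int \<Rightarrow> sym) \<Rightarrow> int \<Rightarrow> sym list \<Rightarrow> sym \<Rightarrow> sym list \<Rightarrow> bool" where
  "weak_decomp T h \<alpha> x \<beta> \<longleftrightarrow>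
     T h = x
   \<and> (\<forall>i<length \<alpha>. T (h - int (length \<alpha>) + int i) = \<alpha> ! i)
   \<and> (\<forall>i<length \<beta>. T (h + 1 + int i) = \<beta> ! i)
   \<and> (\<forall>j::nat. T (h - int (length \<alpha>) - 1 - int j) = w_l ! (3 - j mod 4))
   \<and> (\<forall>j::nat. T (h + 1 + int (length \<beta>) + int j) = w_r ! (j mod 6))"

definition weak_tape :: "config \<Rightarrow> bool" where
  "weak_tape C \<longleftrightarrow> (case C of (u, T, h) \<Rightarrow> \<exists>\<alpha> x \<beta>. weak_decomp T h \<alpha> x \<beta>)"

definition represents :: "marking \<Rightarrow> config \<Rightarrow> bool" where
  "represents M C \<longleftrightarrow> (case C of (u, T, h) \<Rightarrow>
     \<exists>\<alpha> x \<beta>. weak_decomp T h \<alpha> x \<beta>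
       \<and> M pU = scode u \<and> M pX = ycode x \<and> M pL = lam \<alpha> \<and> M pR = rho \<beta>
       \<and> M pSTEP = 1 \<and> (\<forall>p\<in>{6..14}. M p = 0))"

text \<open>Number of base-5 digits of a natural number (0 has one digit).\<close>
fun digits5 :: "nat \<Rightarrow> nat" where
  "digits5 m = (if m < 5 then 1 else 1 + digits5 (m div 5))"

end

theory Submission
  imports Defs
begin


definition VUPN :: "(nat \<times> int \<times> nat) list list" where
  "VUPN = [
    [(pL,-1,167),(pSTEP,1,1)],
    [(pR,-1,13596),(pSTEP,1,1)],
    [(pX,4,2),(pU,1,1),(pSTEP,1,0),(pMOVE,0,1),(pRIGHT,0,1)],
    [(pX,4,4),(pSTEP,1,0),(pMOVE,0,1)],
    [(pX,3,1),(pU,1,1),(pSTEP,1,0),(pMOVE,0,1),(pRIGHT,0,1)],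
    [(pX,3,4),(pSTEP,1,0),(pMOVE,0,1)],
    [(pX,2,3),(pU,1,1),(pSTEP,1,0),(pMOVE,0,1)],
    [(pX,2,4),(pU,0,1),(pSTEP,1,0),(pMOVE,0,1)],
    [(pX,1,4),(pU,1,0),(pSTEP,1,0),(pMOVE,0,1),(pRIGHT,0,1)],
    [(pX,1,3),(pSTEP,1,0),(pMOVE,0,1)],
    [(pR,1,0),(pMOVE,1,1),(pRIGHT,-1,0),(9,0,5)],
    [(pL,1,0),(pMOVE,1,1),(pRIGHT,1,1),(9,0,5)],
    [(pMOVE,1,0),(10,0,1)],
    [(pR,0,1),(pRIGHT,-1,0),(9,1,0),(10,1,1)],
    [(pL,0,1),(pRIGHT,1,1),(9,1,0),(10,1,1)],
    [(10,1,0),(11,0,1)],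
    [(pX,1,0),(pR,0,1),(pRIGHT,-1,0),(11,1,1)],
    [(pX,1,0),(pL,0,1),(pRIGHT,1,1),(11,1,1)],
    [(pMOVE1,0,1),(11,1,0)],
    [(pR,5,0),(pRIGHT,1,1),(pMOVE1,1,1),(14,0,1)],
    [(pL,5,0),(pRIGHT,-1,0),(pMOVE1,1,1),(14,0,1)],
    [(pMOVE1,1,0),(12,0,1)],
    [(pX,0,1),(pR,1,0),(pRIGHT,1,1),(12,1,1)],
    [(pX,0,1),(pL,1,0),(pRIGHT,-1,0),(12,1,1)],
    [(12,1,0),(13,0,1)],
    [(pR,0,1),(pRIGHT,1,1),(13,1,1),(14,1,0)],
    [(pL,0,1),(pRIGHT,-1,0),(13,1,1),(14,1,0)],
    [(pSTEP,0,1),(pRIGHT,1,0),(13,1,0)],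
    [(pSTEP,0,1),(13,1,0)]]"

lemma UPN_VUPN: "UPN = map mk_tr VUPN"
  by (simp add: UPN_def VUPN_def)

lemma VUPN_ok: "\<forall>xs\<in>set VUPN. distinct (map fst xs) \<and> fst ` set xs \<subseteq> {1..14} \<and> (\<forall>(p,a,b)\<in>set xs. b \<le> 13596)"
  by (simp add: VUPN_def pX_def pU_def pL_def pR_def pSTEP_def pMOVE_def pRIGHT_def pMOVE1_def)

definition vfirable :: "(nat \<times> int \<times> nat) list \<Rightarrow> nat list \<Rightarrow> bool" where
  "vfirable xs v = list_all (\<lambda>(p,a,b). (a > 0 \<longrightarrow> int (v!(p-1)) \<ge> a) \<and> (a = -1 \<longrightarrow> v!(p-1) = 0)) xs"

definition vfire :: "(nat \<times> int \<times> nat) list \<Rightarrow> nat list \<Rightarrow> nat list" where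
  "vfire xs v = map (\<lambda>i. case map_of xs (Suc i) of None \<Rightarrow> v!i
      | Some (a,b) \<Rightarrow> v!i - (if a>0 then nat a else 0) + b) [0,1,2,3,4,5,6,7,8,9,10,11,12,13]"

definition vstep :: "nat list \<Rightarrow> nat list option" where
  "vstep v = (case find (\<lambda>xs. vfirable xs v) VUPN of None \<Rightarrow> None | Some xs \<Rightarrow> Some (vfire xs v))"

definition vec :: "marking \<Rightarrow> nat list" where
  "vec M = map (\<lambda>i. M (Suc i)) [0..<14]"

lemma L14: "[0,1,2,3,4,5,6,7,8,9,10,11,12,13] = [0..<14::nat]"
  by (simp add: upt_rec)

lemma vec_nth: "p \<in> {1..14} \<Longrightarrow> vec M ! (p - 1) = M p"
  by (cases p) (auto simp: vec_def)

lemma find_map: "find P (map f xs) = map_option f (find (P \<circ> f) xs)"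
  by (induction xs) auto

lemma length_vec[simp]: "length (vec M) = 14" by (simp add: vec_def)
lemma length_vfire[simp]: "length (vfire xs v) = 14" by (simp add: vfire_def)

lemma firable_mk:
  assumes d: "distinct (map fst xs)" and s: "fst ` set xs \<subseteq> {1..14}"
  shows "firable upn_places (mk_tr xs) M = vfirable xs (vec M)"
proof
  assume F: "firable upn_places (mk_tr xs) M"
  show "vfirable xs (vec M)"
    unfolding vfirable_def list_all_iff
  proof (clarify)
    fix p a b assume pab: "(p,a,b) \<in> set xs"
    have p: "p \<in> {1..14}" using s pab by force
    have m: "map_of xs p = Some (a,b)" using d pab by (simp add: map_of_is_SomeI)
    have "t_in (mk_tr xs) p = a" by (simp add: t_in_def mk_tr_def m)
    then show "(0 < a \<longrightarrow> a \<le> int (vec M ! (p - 1))) \<and> (a = - 1 \<longrightarrow> vec M ! (p - 1) = 0)"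
      using F p vec_nth[OF p] unfolding firable_def upn_places_def by auto
  qed
next
  assume F: "vfirable xs (vec M)"
  show "firable upn_places (mk_tr xs) M"
    unfolding firable_def upn_places_def
  proof
    fix p assume p: "p \<in> {1..14::nat}"
    show "(0 < t_in (mk_tr xs) p \<longrightarrow> int (M p) \<ge> t_in (mk_tr xs) p) \<and> (t_in (mk_tr xs) p = - 1 \<longrightarrow> M p = 0)"
    proof (cases "map_of xs p")
      case None then show ?thesis by (simp add: t_in_def mk_tr_def)
    next
      case (Some ab)
      then obtain a b where m: "map_of xs p = Some (a,b)" by (cases ab) auto
      then have "(p,a,b) \<in> set xs" by (rule map_of_SomeD)
      then have "(0 < a \<longrightarrow> a \<le> int (vec M ! (p - 1))) \<and> (a = - 1 \<longrightarrow> vec M ! (p - 1) = 0)"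
        using F unfolding vfirable_def list_all_iff by fastforce
      then show ?thesis using vec_nth[OF p] m by (simp add: t_in_def mk_tr_def)
    qed
  qed
qed

lemma fire_mk:
  "vec (fire upn_places (mk_tr xs) M) = vfire xs (vec M)"
proof (rule nth_equalityI)
  show "length (vec (fire upn_places (mk_tr xs) M)) = length (vfire xs (vec M))" by simp
next
  fix i assume "i < length (vec (fire upn_places (mk_tr xs) M))"
  then have i: "i < 14" by simp
  then show "vec (fire upn_places (mk_tr xs) M) ! i = vfire xs (vec M) ! i"
    unfolding vfire_def L14 using i
    by (auto simp: vec_def fire_def upn_places_def t_in_def t_out_def mk_tr_def split: option.split)
qed

lemma step_vec: "map_option vec (dipn_step upn_places UPN M) = vstep (vec M)"
proof -
  have "find (\<lambda>t. firable upn_places t M) UPN = map_option mk_tr (find (\<lambda>xs. vfirable xs (vec M)) VUPN)"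
    unfolding UPN_VUPN find_map
    by (rule arg_cong[where f="map_option mk_tr"], rule find_cong) (use VUPN_ok firable_mk in auto)
  then show ?thesis
    by (simp add: dipn_step_def vstep_def fire_mk split: option.split)
qed

fun vrun :: "nat list \<Rightarrow> nat \<Rightarrow> nat list option" where
  "vrun v 0 = Some v"
| "vrun v (Suc k) = (case vrun v k of None \<Rightarrow> None | Some v' \<Rightarrow> vstep v')"

lemma run_vec: "map_option vec (dipn_run upn_places UPN M k) = vrun (vec M) k"
proof (induction k)
  case 0 then show ?case by simp
next
  case (Suc k)
  show ?case
  proof (cases "dipn_run upn_places UPN M k")
    case None then show ?thesis using Suc.IH by simp
  next
    case (Some a) then show ?thesis using Suc.IH[symmetric] by (simp add: step_vec)
  qed
qed

lemma vrun_add: "vrun v (a + b) = (case vrun v a of None \<Rightarrow> None | Some v' \<Rightarrow> vrun v' b)"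
  by (induction b) (auto split: option.split)




lemmas vs = vstep_def VUPN_def vfirable_def vfire_def pX_def pU_def pL_def pR_def pSTEP_def pMOVE_def pRIGHT_def pMOVE1_def

lemma vrun_Suc': "vstep v = Some v' \<Longrightarrow> vrun v (Suc n) = vrun v' n"
  using vrun_add[of v 1 n] by simp

lemma vrun_seq: "vrun v a = Some v' \<Longrightarrow> vrun v' b = Some v'' \<Longrightarrow> vrun v (a+b) = Some v''"
  by (simp add: vrun_add)

lemma vrun_1: "vstep v = Some v' \<Longrightarrow> vrun v 1 = Some v'"
  by simp

lemma L1: "vrun [x,u,l,n,0,1,0,0,a,0,0,0,0,0] n = Some [x,u,l,0,0,1,0,0,a+5*n,0,0,0,0,0]"
proof (induction n arbitrary: a)
  case 0 then show ?case by simp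
next
  case (Suc n)
  have s: "vstep [x,u,l,Suc n,0,1,0,0,a,0,0,0,0,0] = Some [x,u,l,n,0,1,0,0,a+5,0,0,0,0,0]" by (simp add: vs)
  show ?case unfolding vrun_Suc'[OF s] using Suc.IH[of "a+5"] by (simp add: algebra_simps)
qed

lemma L2: "vstep [x,u,l,0,0,1,0,0,c,0,0,0,0,0] = Some [x,u,l,0,0,0,0,0,c,1,0,0,0,0]" by (simp add: vs)

lemma L3: "vrun [x,u,l,r,0,0,0,0,n,1,0,0,0,0] n = Some [x,u,l,r+n,0,0,0,0,0,1,0,0,0,0]"
proof (induction n arbitrary: r)
  case 0 then show ?case by simp
next
  case (Suc n)
  have s: "vstep [x,u,l,r,0,0,0,0,Suc n,1,0,0,0,0] = Some [x,u,l,r+1,0,0,0,0,n,1,0,0,0,0]" by (simp add: vs)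
  show ?case unfolding vrun_Suc'[OF s] using Suc.IH[of "r+1"] by (simp add: algebra_simps)
qed

lemma L4: "vstep [x,u,l,r,0,0,0,0,0,1,0,0,0,0] = Some [x,u,l,r,0,0,0,0,0,0,1,0,0,0]" by (simp add: vs)

lemma L5: "vrun [n,u,l,r,0,0,0,0,0,0,1,0,0,0] n = Some [0,u,l,r+n,0,0,0,0,0,0,1,0,0,0]"
proof (induction n arbitrary: r)
  case 0 then show ?case by simp
next
  case (Suc n)
  have s: "vstep [Suc n,u,l,r,0,0,0,0,0,0,1,0,0,0] = Some [n,u,l,r+1,0,0,0,0,0,0,1,0,0,0]" by (simp add: vs)
  show ?case unfolding vrun_Suc'[OF s] using Suc.IH[of "r+1"] by (simp add: algebra_simps)
qed

lemma L6: "vstep [0,u,l,r,0,0,0,0,0,0,1,0,0,0] = Some [0,u,l,r,0,0,0,1,0,0,0,0,0,0]" by (simp add: vs)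

lemma L7: "vrun [0,u,5*n+m,r,0,0,0,1,0,0,0,0,0,a] n = Some [0,u,m,r,0,0,0,1,0,0,0,0,0,a+n]"
proof (induction n arbitrary: a)
  case 0 then show ?case by simp
next
  case (Suc n)
  have s: "vstep [0,u,5*Suc n+m,r,0,0,0,1,0,0,0,0,0,a] = Some [0,u,5*n+m,r,0,0,0,1,0,0,0,0,0,a+1]" by (simp add: vs)
  show ?case unfolding vrun_Suc'[OF s] using Suc.IH[of "a+1"] by (simp add: algebra_simps)
qed

lemma L8: "m < 5 \<Longrightarrow> vstep [0,u,m,r,0,0,0,1,0,0,0,0,0,a] = Some [0,u,m,r,0,0,0,0,0,0,0,1,0,a]" by (simp add: vs)

lemma L9: "vrun [x,u,n,r,0,0,0,0,0,0,0,1,0,a] n = Some [x+n,u,0,r,0,0,0,0,0,0,0,1,0,a]"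
proof (induction n arbitrary: x)
  case 0 then show ?case by simp
next
  case (Suc n)
  have s: "vstep [x,u,Suc n,r,0,0,0,0,0,0,0,1,0,a] = Some [x+1,u,n,r,0,0,0,0,0,0,0,1,0,a]" by (simp add: vs)
  show ?case unfolding vrun_Suc'[OF s] using Suc.IH[of "x+1"] by (simp add: algebra_simps)
qed

lemma L10: "vstep [x,u,0,r,0,0,0,0,0,0,0,1,0,a] = Some [x,u,0,r,0,0,0,0,0,0,0,0,1,a]" by (simp add: vs)

lemma L11: "vrun [x,u,l,r,0,0,0,0,0,0,0,0,1,n] n = Some [x,u,l+n,r,0,0,0,0,0,0,0,0,1,0]"
proof (induction n arbitrary: l)
  case 0 then show ?case by simp
next
  case (Suc n)
  have s: "vstep [x,u,l,r,0,0,0,0,0,0,0,0,1,Suc n] = Some [x,u,l+1,r,0,0,0,0,0,0,0,0,1,n]" by (simp add: vs)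
  show ?case unfolding vrun_Suc'[OF s] using Suc.IH[of "l+1"] by (simp add: algebra_simps)
qed

lemma L12: "vstep [x,u,l,r,0,0,0,0,0,0,0,0,1,0] = Some [x,u,l,r,1,0,0,0,0,0,0,0,0,0]" by (simp add: vs)

lemma R1: "vrun [x,u,n,r,0,1,1,0,a,0,0,0,0,0] n = Some [x,u,0,r,0,1,1,0,a+5*n,0,0,0,0,0]"
proof (induction n arbitrary: a)
  case 0 then show ?case by simp
next
  case (Suc n)
  have s: "vstep [x,u,Suc n,r,0,1,1,0,a,0,0,0,0,0] = Some [x,u,n,r,0,1,1,0,a+5,0,0,0,0,0]" by (simp add: vs)
  show ?case unfolding vrun_Suc'[OF s] using Suc.IH[of "a+5"] by (simp add: algebra_simps)
qed

lemma R2: "vstep [x,u,0,r,0,1,1,0,c,0,0,0,0,0] = Some [x,u,0,r,0,0,1,0,c,1,0,0,0,0]" by (simp add: vs)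

lemma R3: "vrun [x,u,l,r,0,0,1,0,n,1,0,0,0,0] n = Some [x,u,l+n,r,0,0,1,0,0,1,0,0,0,0]"
proof (induction n arbitrary: l)
  case 0 then show ?case by simp
next
  case (Suc n)
  have s: "vstep [x,u,l,r,0,0,1,0,Suc n,1,0,0,0,0] = Some [x,u,l+1,r,0,0,1,0,n,1,0,0,0,0]" by (simp add: vs)
  show ?case unfolding vrun_Suc'[OF s] using Suc.IH[of "l+1"] by (simp add: algebra_simps)
qed

lemma R4: "vstep [x,u,l,r,0,0,1,0,0,1,0,0,0,0] = Some [x,u,l,r,0,0,1,0,0,0,1,0,0,0]" by (simp add: vs)

lemma R5: "vrun [n,u,l,r,0,0,1,0,0,0,1,0,0,0] n = Some [0,u,l+n,r,0,0,1,0,0,0,1,0,0,0]"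
proof (induction n arbitrary: l)
  case 0 then show ?case by simp
next
  case (Suc n)
  have s: "vstep [Suc n,u,l,r,0,0,1,0,0,0,1,0,0,0] = Some [n,u,l+1,r,0,0,1,0,0,0,1,0,0,0]" by (simp add: vs)
  show ?case unfolding vrun_Suc'[OF s] using Suc.IH[of "l+1"] by (simp add: algebra_simps)
qed

lemma R6: "vstep [0,u,l,r,0,0,1,0,0,0,1,0,0,0] = Some [0,u,l,r,0,0,1,1,0,0,0,0,0,0]" by (simp add: vs)

lemma R7: "vrun [0,u,l,5*n+m,0,0,1,1,0,0,0,0,0,a] n = Some [0,u,l,m,0,0,1,1,0,0,0,0,0,a+n]"
proof (induction n arbitrary: a)
  case 0 then show ?case by simp
next
  case (Suc n)
  have s: "vstep [0,u,l,5*Suc n+m,0,0,1,1,0,0,0,0,0,a] = Some [0,u,l,5*n+m,0,0,1,1,0,0,0,0,0,a+1]" by (simp add: vs)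
  show ?case unfolding vrun_Suc'[OF s] using Suc.IH[of "a+1"] by (simp add: algebra_simps)
qed

lemma R8: "m < 5 \<Longrightarrow> vstep [0,u,l,m,0,0,1,1,0,0,0,0,0,a] = Some [0,u,l,m,0,0,1,0,0,0,0,1,0,a]" by (simp add: vs)

lemma R9: "vrun [x,u,l,n,0,0,1,0,0,0,0,1,0,a] n = Some [x+n,u,l,0,0,0,1,0,0,0,0,1,0,a]"
proof (induction n arbitrary: x)
  case 0 then show ?case by simp
next
  case (Suc n)
  have s: "vstep [x,u,l,Suc n,0,0,1,0,0,0,0,1,0,a] = Some [x+1,u,l,n,0,0,1,0,0,0,0,1,0,a]" by (simp add: vs)
  show ?case unfolding vrun_Suc'[OF s] using Suc.IH[of "x+1"] by (simp add: algebra_simps)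
qed

lemma R10: "vstep [x,u,l,0,0,0,1,0,0,0,0,1,0,a] = Some [x,u,l,0,0,0,1,0,0,0,0,0,1,a]" by (simp add: vs)

lemma R11: "vrun [x,u,l,r,0,0,1,0,0,0,0,0,1,n] n = Some [x,u,l,r+n,0,0,1,0,0,0,0,0,1,0]"
proof (induction n arbitrary: r)
  case 0 then show ?case by simp
next
  case (Suc n)
  have s: "vstep [x,u,l,r,0,0,1,0,0,0,0,0,1,Suc n] = Some [x,u,l,r+1,0,0,1,0,0,0,0,0,1,n]" by (simp add: vs)
  show ?case unfolding vrun_Suc'[OF s] using Suc.IH[of "r+1"] by (simp add: algebra_simps)
qed

lemma R12: "vstep [x,u,l,r,0,0,1,0,0,0,0,0,1,0] = Some [x,u,l,r,1,0,0,0,0,0,0,0,0,0]" by (simp add: vs)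

lemma S1: "vstep [x,u,0,r,1,0,0,0,0,0,0,0,0,0] = Some [x,u,167,r,1,0,0,0,0,0,0,0,0,0]" by (simp add: vs)
lemma S2: "l \<noteq> 0 \<Longrightarrow> vstep [x,u,l,0,1,0,0,0,0,0,0,0,0,0] = Some [x,u,l,13596,1,0,0,0,0,0,0,0,0,0]" by (simp add: vs)

lemma move_left:
  "vrun [w,u,l,r,0,1,0,0,0,0,0,0,0,0] (6*r + w + 2*(l div 5) + l mod 5 + 6)
     = Some [l mod 5, u, l div 5, 5*r+w, 1,0,0,0,0,0,0,0,0,0]"
proof -
  have a: "l = 5*(l div 5) + l mod 5" by simp
  have 1: "vrun [w,u,l,r,0,1,0,0,0,0,0,0,0,0] r = Some [w,u,l,0,0,1,0,0,5*r,0,0,0,0,0]"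
    using L1[of w u l r 0] by simp
  have 2: "vrun [w,u,l,0,0,1,0,0,5*r,0,0,0,0,0] 1 = Some [w,u,l,0,0,0,0,0,5*r,1,0,0,0,0]"
    by (rule vrun_1, rule L2)
  have 3: "vrun [w,u,l,0,0,0,0,0,5*r,1,0,0,0,0] (5*r) = Some [w,u,l,5*r,0,0,0,0,0,1,0,0,0,0]"
    using L3[of w u l 0 "5*r"] by simp
  have 4: "vrun [w,u,l,5*r,0,0,0,0,0,1,0,0,0,0] 1 = Some [w,u,l,5*r,0,0,0,0,0,0,1,0,0,0]"
    by (rule vrun_1, rule L4)
  have 5: "vrun [w,u,l,5*r,0,0,0,0,0,0,1,0,0,0] w = Some [0,u,l,5*r+w,0,0,0,0,0,0,1,0,0,0]"
    by (rule L5)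
  have 6: "vrun [0,u,l,5*r+w,0,0,0,0,0,0,1,0,0,0] 1 = Some [0,u,l,5*r+w,0,0,0,1,0,0,0,0,0,0]"
    by (rule vrun_1, rule L6)
  have 7: "vrun [0,u,l,5*r+w,0,0,0,1,0,0,0,0,0,0] (l div 5) = Some [0,u,l mod 5,5*r+w,0,0,0,1,0,0,0,0,0,l div 5]"
    using L7[of u "l div 5" "l mod 5" "5*r+w" 0] a by simp
  have 8: "vrun [0,u,l mod 5,5*r+w,0,0,0,1,0,0,0,0,0,l div 5] 1 = Some [0,u,l mod 5,5*r+w,0,0,0,0,0,0,0,1,0,l div 5]"
    by (rule vrun_1, rule L8) simp
  have 9: "vrun [0,u,l mod 5,5*r+w,0,0,0,0,0,0,0,1,0,l div 5] (l mod 5) = Some [l mod 5,u,0,5*r+w,0,0,0,0,0,0,0,1,0,l div 5]"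
    using L9[of 0 u "l mod 5" "5*r+w" "l div 5"] by simp
  have 10: "vrun [l mod 5,u,0,5*r+w,0,0,0,0,0,0,0,1,0,l div 5] 1 = Some [l mod 5,u,0,5*r+w,0,0,0,0,0,0,0,0,1,l div 5]"
    by (rule vrun_1, rule L10)
  have 11: "vrun [l mod 5,u,0,5*r+w,0,0,0,0,0,0,0,0,1,l div 5] (l div 5) = Some [l mod 5,u,l div 5,5*r+w,0,0,0,0,0,0,0,0,1,0]"
    using L11[of "l mod 5" u 0 "5*r+w" "l div 5"] by simp
  have 12: "vrun [l mod 5,u,l div 5,5*r+w,0,0,0,0,0,0,0,0,1,0] 1 = Some [l mod 5,u,l div 5,5*r+w,1,0,0,0,0,0,0,0,0,0]"
    by (rule vrun_1, rule L12)
  have "vrun [w,u,l,r,0,1,0,0,0,0,0,0,0,0] (r+1+5*r+1+w+1+l div 5+1+l mod 5+1+l div 5+1)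
     = Some [l mod 5, u, l div 5, 5*r+w, 1,0,0,0,0,0,0,0,0,0]"
    by (rule vrun_seq[OF vrun_seq[OF vrun_seq[OF vrun_seq[OF vrun_seq[OF vrun_seq[OF vrun_seq[OF vrun_seq[OF vrun_seq[OF vrun_seq[OF vrun_seq[OF 1 2] 3] 4] 5] 6] 7] 8] 9] 10] 11] 12])
  moreover have "r+1+5*r+1+w+1+l div 5+1+l mod 5+1+l div 5+1 = 6*r + w + 2*(l div 5) + l mod 5 + 6" by simp
  ultimately show ?thesis by metis
qed

lemma move_right:
  "vrun [w,u,l,r,0,1,1,0,0,0,0,0,0,0] (6*l + w + 2*(r div 5) + r mod 5 + 6)
     = Some [r mod 5, u, 5*l+w, r div 5, 1,0,0,0,0,0,0,0,0,0]"
proof -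
  have a: "r = 5*(r div 5) + r mod 5" by simp
  have 1: "vrun [w,u,l,r,0,1,1,0,0,0,0,0,0,0] l = Some [w,u,0,r,0,1,1,0,5*l,0,0,0,0,0]"
    using R1[of w u l r 0] by simp
  have 2: "vrun [w,u,0,r,0,1,1,0,5*l,0,0,0,0,0] 1 = Some [w,u,0,r,0,0,1,0,5*l,1,0,0,0,0]"
    by (rule vrun_1, rule R2)
  have 3: "vrun [w,u,0,r,0,0,1,0,5*l,1,0,0,0,0] (5*l) = Some [w,u,5*l,r,0,0,1,0,0,1,0,0,0,0]"
    using R3[of w u 0 r "5*l"] by simp
  have 4: "vrun [w,u,5*l,r,0,0,1,0,0,1,0,0,0,0] 1 = Some [w,u,5*l,r,0,0,1,0,0,0,1,0,0,0]"
    by (rule vrun_1, rule R4)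
  have 5: "vrun [w,u,5*l,r,0,0,1,0,0,0,1,0,0,0] w = Some [0,u,5*l+w,r,0,0,1,0,0,0,1,0,0,0]"
    by (rule R5)
  have 6: "vrun [0,u,5*l+w,r,0,0,1,0,0,0,1,0,0,0] 1 = Some [0,u,5*l+w,r,0,0,1,1,0,0,0,0,0,0]"
    by (rule vrun_1, rule R6)
  have 7: "vrun [0,u,5*l+w,r,0,0,1,1,0,0,0,0,0,0] (r div 5) = Some [0,u,5*l+w,r mod 5,0,0,1,1,0,0,0,0,0,r div 5]"
    using R7[of u "5*l+w" "r div 5" "r mod 5" 0] a by simp
  have 8: "vrun [0,u,5*l+w,r mod 5,0,0,1,1,0,0,0,0,0,r div 5] 1 = Some [0,u,5*l+w,r mod 5,0,0,1,0,0,0,0,1,0,r div 5]"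
    by (rule vrun_1, rule R8) simp
  have 9: "vrun [0,u,5*l+w,r mod 5,0,0,1,0,0,0,0,1,0,r div 5] (r mod 5) = Some [r mod 5,u,5*l+w,0,0,0,1,0,0,0,0,1,0,r div 5]"
    using R9[of 0 u "5*l+w" "r mod 5" "r div 5"] by simp
  have 10: "vrun [r mod 5,u,5*l+w,0,0,0,1,0,0,0,0,1,0,r div 5] 1 = Some [r mod 5,u,5*l+w,0,0,0,1,0,0,0,0,0,1,r div 5]"
    by (rule vrun_1, rule R10)
  have 11: "vrun [r mod 5,u,5*l+w,0,0,0,1,0,0,0,0,0,1,r div 5] (r div 5) = Some [r mod 5,u,5*l+w,r div 5,0,0,1,0,0,0,0,0,1,0]"
    using R11[of "r mod 5" u "5*l+w" 0 "r div 5"] by simp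
  have 12: "vrun [r mod 5,u,5*l+w,r div 5,0,0,1,0,0,0,0,0,1,0] 1 = Some [r mod 5,u,5*l+w,r div 5,1,0,0,0,0,0,0,0,0,0]"
    by (rule vrun_1, rule R12)
  have "vrun [w,u,l,r,0,1,1,0,0,0,0,0,0,0] (l+1+5*l+1+w+1+r div 5+1+r mod 5+1+r div 5+1)
     = Some [r mod 5, u, 5*l+w, r div 5, 1,0,0,0,0,0,0,0,0,0]"
    by (rule vrun_seq[OF vrun_seq[OF vrun_seq[OF vrun_seq[OF vrun_seq[OF vrun_seq[OF vrun_seq[OF vrun_seq[OF vrun_seq[OF vrun_seq[OF vrun_seq[OF 1 2] 3] 4] 5] 6] 7] 8] 9] 10] 11] 12])
  moreover have "l+1+5*l+1+w+1+r div 5+1+r mod 5+1+r div 5+1 = 6*l + w + 2*(r div 5) + r mod 5 + 6" by simp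
  ultimately show ?thesis by metis
qed




lemma ycode_bounds: "1 \<le> ycode y \<and> ycode y \<le> 4"
  by (cases y) (auto simp: ycode_def)

lemma lam_snoc: "lam (\<alpha> @ [a]) = 5 * lam \<alpha> + ycode a"
proof -
  let ?n = "length \<alpha>"
  have "lam (\<alpha> @ [a]) = (\<Sum>i<?n. ycode (\<alpha> ! i) * 5 ^ (?n - i)) + ycode a"
    by (simp add: lam_def nth_append)
  also have "(\<Sum>i<?n. ycode (\<alpha> ! i) * 5 ^ (?n - i)) = (\<Sum>i<?n. 5 * (ycode (\<alpha> ! i) * 5 ^ (?n - 1 - i)))"
  proof (rule sum.cong)
    fix i assume "i \<in> {..<?n}"
    then have "?n - i = Suc (?n - 1 - i)" by auto
    then show "ycode (\<alpha> ! i) * 5 ^ (?n - i) = 5 * (ycode (\<alpha> ! i) * 5 ^ (?n - 1 - i))" by simp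
  qed simp
  also have "\<dots> = 5 * lam \<alpha>" by (simp add: lam_def sum_distrib_left)
  finally show ?thesis .
qed

lemma rho_Cons: "rho (b # \<beta>) = ycode b + 5 * rho \<beta>"
  unfolding rho_def
  by (simp add: sum.lessThan_Suc_shift sum_distrib_left mult.commute mult.left_commute del: sum.lessThan_Suc)

lemma lam_0: "lam \<alpha> = 0 \<longleftrightarrow> \<alpha> = []"
proof (cases \<alpha> rule: rev_cases)
  case Nil then show ?thesis by (simp add: lam_def)
next
  case (snoc ys y) then show ?thesis using ycode_bounds[of y] by (simp add: lam_snoc)
qed

lemma rho_0: "rho \<beta> = 0 \<longleftrightarrow> \<beta> = []"
proof (cases \<beta>)
  case Nil then show ?thesis by (simp add: rho_def)
next
  case (Cons y ys) then show ?thesis using ycode_bounds[of y] by (simp add: rho_Cons)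
qed

lemma lam_wl: "lam w_l = 167" by (simp add: lam_def w_l_def ycode_def lessThan_nat_numeral)
lemma rho_wr: "rho w_r = 13596" by (simp add: rho_def w_r_def ycode_def lessThan_nat_numeral)

lemma wd_ins_l:
  assumes "weak_decomp T h [] x \<beta>" shows "weak_decomp T h w_l x \<beta>"
proof -
  have L: "\<And>j::nat. T (h - 1 - int j) = w_l ! (3 - j mod 4)" using assms by (simp add: weak_decomp_def)
  have a: "\<forall>i<length w_l. T (h - int (length w_l) + int i) = w_l ! i"
  proof (intro allI impI)
    fix i assume "i < length w_l"
    then have i: "i < 4" by (simp add: w_l_def)
    have "T (h - 1 - int (3 - i)) = w_l ! (3 - (3-i) mod 4)" by (rule L)
    moreover have "h - 1 - int (3 - i) = h - int (length w_l) + int i" using i by (simp add: w_l_def)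
    moreover have "3 - (3-i) mod 4 = i" using i by simp
    ultimately show "T (h - int (length w_l) + int i) = w_l ! i" by metis
  qed
  have b: "\<forall>j::nat. T (h - int (length w_l) - 1 - int j) = w_l ! (3 - j mod 4)"
  proof
    fix j :: nat
    have "T (h - 1 - int (j+4)) = w_l ! (3 - (j+4) mod 4)" by (rule L)
    moreover have "h - 1 - int (j+4) = h - int (length w_l) - 1 - int j" by (simp add: w_l_def)
    moreover have "(j+4) mod 4 = j mod 4" by simp
    ultimately show "T (h - int (length w_l) - 1 - int j) = w_l ! (3 - j mod 4)" by metis
  qed
  show ?thesis using assms a b unfolding weak_decomp_def by simp
qed

lemma wd_ins_r:
  assumes "weak_decomp T h \<alpha> x []" shows "weak_decomp T h \<alpha> x w_r"
proof -
  have R: "\<And>j::nat. T (h + 1 + int j) = w_r ! (j mod 6)" using assms by (simp add: weak_decomp_def)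
  have a: "\<forall>i<length w_r. T (h + 1 + int i) = w_r ! i"
    using R by (simp add: w_r_def)
  have b: "\<forall>j::nat. T (h + 1 + int (length w_r) + int j) = w_r ! (j mod 6)"
  proof
    fix j :: nat
    have "T (h + 1 + int (j+6)) = w_r ! ((j+6) mod 6)" by (rule R)
    moreover have "h + 1 + int (j+6) = h + 1 + int (length w_r) + int j" by (simp add: w_r_def)
    moreover have "(j+6) mod 6 = j mod 6" by simp
    ultimately show "T (h + 1 + int (length w_r) + int j) = w_r ! (j mod 6)" by metis
  qed
  show ?thesis using assms a b unfolding weak_decomp_def by simp
qed

lemma wd_left:
  assumes "weak_decomp T h (\<alpha> @ [a]) x \<beta>"
  shows "weak_decomp (T(h := w)) (h - 1) \<alpha> a (w # \<beta>)"
proof -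
  let ?n = "length \<alpha>"
  have A: "\<And>i. i < Suc ?n \<Longrightarrow> T (h - int (Suc ?n) + int i) = (\<alpha> @ [a]) ! i"
    using assms by (simp add: weak_decomp_def)
  have B: "\<And>i. i < length \<beta> \<Longrightarrow> T (h + 1 + int i) = \<beta> ! i" using assms by (simp add: weak_decomp_def)
  have Lw: "\<And>j::nat. T (h - int (Suc ?n) - 1 - int j) = w_l ! (3 - j mod 4)" using assms by (simp add: weak_decomp_def)
  have Rw: "\<And>j::nat. T (h + 1 + int (length \<beta>) + int j) = w_r ! (j mod 6)" using assms by (simp add: weak_decomp_def)
  have 1: "(T(h := w)) (h - 1) = a" using A[of ?n] by simp
  have 2: "\<forall>i<?n. (T(h := w)) (h - 1 - int ?n + int i) = \<alpha> ! i"
  proof (intro allI impI)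
    fix i assume i: "i < ?n"
    have "T (h - int (Suc ?n) + int i) = (\<alpha> @ [a]) ! i" using A[of i] i by simp
    then show "(T(h := w)) (h - 1 - int ?n + int i) = \<alpha> ! i" using i by (simp add: nth_append algebra_simps)
  qed
  have 3: "\<forall>i<length (w # \<beta>). (T(h := w)) (h - 1 + 1 + int i) = (w # \<beta>) ! i"
  proof (intro allI impI)
    fix i assume i: "i < length (w # \<beta>)"
    show "(T(h := w)) (h - 1 + 1 + int i) = (w # \<beta>) ! i"
    proof (cases i)
      case 0 then show ?thesis by simp
    next
      case (Suc k)
      then have "T (h + 1 + int k) = \<beta> ! k" using B[of k] i by simp
      then show ?thesis using Suc by (simp add: algebra_simps)
    qed
  qed
  have 4: "\<forall>j::nat. (T(h := w)) (h - 1 - int ?n - 1 - int j) = w_l ! (3 - j mod 4)"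
    using Lw by (simp add: algebra_simps)
  have 5: "\<forall>j::nat. (T(h := w)) (h - 1 + 1 + int (length (w # \<beta>)) + int j) = w_r ! (j mod 6)"
    using Rw by (simp add: algebra_simps)
  show ?thesis unfolding weak_decomp_def using 1 2 3 4 5 by simp
qed

lemma wd_right:
  assumes "weak_decomp T h \<alpha> x (b # \<beta>)"
  shows "weak_decomp (T(h := w)) (h + 1) (\<alpha> @ [w]) b \<beta>"
proof -
  let ?n = "length \<alpha>"
  have A: "\<And>i. i < ?n \<Longrightarrow> T (h - int ?n + int i) = \<alpha> ! i"
    using assms by (simp add: weak_decomp_def)
  have B: "\<And>i. i < Suc (length \<beta>) \<Longrightarrow> T (h + 1 + int i) = (b # \<beta>) ! i" using assms by (simp add: weak_decomp_def)
  have Lw: "\<And>j::nat. T (h - int ?n - 1 - int j) = w_l ! (3 - j mod 4)" using assms by (simp add: weak_decomp_def)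
  have Rw: "\<And>j::nat. T (h + 1 + int (Suc (length \<beta>)) + int j) = w_r ! (j mod 6)" using assms by (simp add: weak_decomp_def)
  have 1: "(T(h := w)) (h + 1) = b" using B[of 0] by simp
  have 2: "\<forall>i<length (\<alpha> @ [w]). (T(h := w)) (h + 1 - int (length (\<alpha> @ [w])) + int i) = (\<alpha> @ [w]) ! i"
  proof (intro allI impI)
    fix i assume i: "i < length (\<alpha> @ [w])"
    show "(T(h := w)) (h + 1 - int (length (\<alpha> @ [w])) + int i) = (\<alpha> @ [w]) ! i"
    proof (cases "i < ?n")
      case True
      then show ?thesis using A[of i] by (simp add: nth_append algebra_simps)
    next
      case False
      then have "i = ?n" using i by simp
      then show ?thesis by simp
    qed
  qed
  have 3: "\<forall>i<length \<beta>. (T(h := w)) (h + 1 + 1 + int i) = \<beta> ! i"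
  proof (intro allI impI)
    fix i assume i: "i < length \<beta>"
    have "T (h + 1 + int (Suc i)) = (b # \<beta>) ! Suc i" using B[of "Suc i"] i by simp
    then show "(T(h := w)) (h + 1 + 1 + int i) = \<beta> ! i" by (simp add: algebra_simps)
  qed
  have 4: "\<forall>j::nat. (T(h := w)) (h + 1 - int (length (\<alpha> @ [w])) - 1 - int j) = w_l ! (3 - j mod 4)"
    using Lw by (simp add: algebra_simps)
  have 5: "\<forall>j::nat. (T(h := w)) (h + 1 + 1 + int (length \<beta>) + int j) = w_r ! (j mod 6)"
    using Rw by (simp add: algebra_simps)
  show ?thesis unfolding weak_decomp_def using 1 2 3 4 5 by simp
qed




definition vrep :: "nat list \<Rightarrow> config \<Rightarrow> bool" where
  "vrep v C \<longleftrightarrow> (case C of (u,T,h) \<Rightarrow> \<exists>\<alpha> x \<beta>. weak_decomp T h \<alpha> x \<beta>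
      \<and> v = [ycode x, scode u, lam \<alpha>, rho \<beta>, 1,0,0,0,0,0,0,0,0,0])"

lemma lam_Nil: "lam [] = 0" by (simp add: lam_def)
lemma rho_Nil: "rho [] = 0" by (simp add: rho_def)

lemma S3: "l \<noteq> 0 \<Longrightarrow> r \<noteq> 0 \<Longrightarrow> delta y u = (w,d,u') \<Longrightarrow>
  vstep [ycode y, scode u, l, r, 1,0,0,0,0,0,0,0,0,0] =
    Some [ycode w, scode u', l, r, 0, 1, (if d = Rgt then 1 else 0), 0,0,0,0,0,0,0]"
  by (cases y; cases u) (auto simp: vs ycode_def scode_def)

lemma macro:
  assumes "vrep v C"
  shows "\<exists>m v'. vrun v m = Some v' \<and> vrep v' (tm_step C) \<and> 1 \<le> m
     \<and> m \<le> 6*(v!2+v!3) + 82600 \<and> v'!2 + v'!3 \<le> 5*(v!2+v!3) + 68820"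
proof -
  obtain u T h where C: "C = (u,T,h)" by (cases C)
  obtain \<alpha> x \<beta> where wd: "weak_decomp T h \<alpha> x \<beta>"
    and v: "v = [ycode x, scode u, lam \<alpha>, rho \<beta>, 1,0,0,0,0,0,0,0,0,0]"
    using assms unfolding vrep_def C by auto
  define \<alpha>1 where "\<alpha>1 = (if \<alpha> = [] then w_l else \<alpha>)"
  define \<beta>1 where "\<beta>1 = (if \<beta> = [] then w_r else \<beta>)"
  have wda: "weak_decomp T h \<alpha>1 x \<beta>" using wd wd_ins_l unfolding \<alpha>1_def by auto
  have wd1: "weak_decomp T h \<alpha>1 x \<beta>1" using wda wd_ins_r unfolding \<beta>1_def by auto
  have a1: "\<alpha>1 \<noteq> []" and b1: "\<beta>1 \<noteq> []" by (auto simp: \<alpha>1_def \<beta>1_def w_l_def w_r_def)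
  have l1: "lam \<alpha>1 \<le> lam \<alpha> + 167" by (simp add: \<alpha>1_def lam_wl)
  have r1: "rho \<beta>1 \<le> rho \<beta> + 13596" by (simp add: \<beta>1_def rho_wr)
  define l where "l = lam \<alpha>1"
  define r where "r = rho \<beta>1"
  have ln: "l \<noteq> 0" using a1 lam_0 l_def by auto
  have rn: "r \<noteq> 0" using b1 rho_0 r_def by auto
  obtain ia va where ia: "ia \<le> 1" and va: "vrun v ia = Some va"
    and vaq: "va = [ycode x, scode u, l, rho \<beta>, 1,0,0,0,0,0,0,0,0,0]"
  proof (cases "\<alpha> = []")
    case True
    have s1: "vstep [ycode x, scode u, 0, rho \<beta>, 1,0,0,0,0,0,0,0,0,0] = Some [ycode x, scode u, 167, rho \<beta>, 1,0,0,0,0,0,0,0,0,0]"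
      by (rule S1)
    have "vstep v = Some [ycode x, scode u, l, rho \<beta>, 1,0,0,0,0,0,0,0,0,0]"
      using True s1 unfolding v l_def \<alpha>1_def by (simp add: lam_wl lam_Nil)
    then show ?thesis using that[of 1] by simp
  next
    case False
    then show ?thesis using that[of 0] v unfolding l_def \<alpha>1_def by simp
  qed
  obtain ib vb where ib: "ib \<le> 1" and vb: "vrun va ib = Some vb"
    and vbq: "vb = [ycode x, scode u, l, r, 1,0,0,0,0,0,0,0,0,0]"
  proof (cases "\<beta> = []")
    case True
    have s2: "vstep [ycode x, scode u, l, 0, 1,0,0,0,0,0,0,0,0,0] = Some [ycode x, scode u, l, 13596, 1,0,0,0,0,0,0,0,0,0]"
      by (rule S2[OF ln])
    have "vstep va = Some [ycode x, scode u, l, r, 1,0,0,0,0,0,0,0,0,0]"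
      using True s2 unfolding vaq r_def \<beta>1_def by (simp add: rho_wr rho_Nil)
    then show ?thesis using that[of 1] by simp
  next
    case False
    then show ?thesis using that[of 0] vaq unfolding r_def \<beta>1_def by simp
  qed
  obtain w d u' where dl: "delta x u = (w,d,u')" by (metis prod_cases3)
  have Th: "T h = x" using wd by (simp add: weak_decomp_def)
  have st: "vrun vb 1 = Some [ycode w, scode u', l, r, 0, 1, (if d = Rgt then 1 else 0), 0,0,0,0,0,0,0]"
    unfolding vbq by (rule vrun_1, rule S3[OF ln rn dl])
  have vb_run: "vrun v (ia + ib + 1) = Some [ycode w, scode u', l, r, 0, 1, (if d = Rgt then 1 else 0), 0,0,0,0,0,0,0]"
    by (rule vrun_seq[OF vrun_seq[OF va vb] st])
  have wb: "ycode w \<le> 4" using ycode_bounds by blast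
  have v23: "v!2 + v!3 = lam \<alpha> + rho \<beta>" by (simp add: v)
  show ?thesis
  proof (cases d)
    case Lft
    obtain \<alpha>2 a where a2: "\<alpha>1 = \<alpha>2 @ [a]" using a1 by (metis rev_exhaust)
    have lq: "l = 5 * lam \<alpha>2 + ycode a" by (simp add: l_def a2 lam_snoc)
    have ya: "ycode a < 5" using ycode_bounds[of a] by simp
    have lm: "l mod 5 = ycode a" and ld: "l div 5 = lam \<alpha>2" using lq ya by auto
    define m2 where "m2 = 6*r + ycode w + 2*(l div 5) + l mod 5 + 6"
    define v' where "v' = [l mod 5, scode u', l div 5, 5*r+ycode w, 1,0,0,0,0,0,0,0,0,0]"
    have mv: "vrun [ycode w, scode u', l, r, 0, 1, 0, 0,0,0,0,0,0,0] m2 = Some v'"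
      unfolding m2_def v'_def by (rule move_left)
    have run: "vrun v (ia + ib + 1 + m2) = Some v'"
      by (rule vrun_seq[OF vb_run]) (use mv Lft in simp)
    have tm: "tm_step C = (u', T(h := w), h - 1)" using dl Th Lft C by simp
    have wd2: "weak_decomp (T(h := w)) (h - 1) \<alpha>2 a (w # \<beta>1)"
      using wd1 a2 wd_left by blast
    have rep: "vrep v' (tm_step C)"
      unfolding tm vrep_def prod.case
      by (rule exI[of _ \<alpha>2], rule exI[of _ a], rule exI[of _ "w # \<beta>1"]) (use wd2 in \<open>simp add: v'_def lm ld rho_Cons r_def\<close>)
    have c1: "ia + ib + 1 + m2 \<le> 6*(v!2+v!3) + 82600"
      using ia ib wb l1 r1 unfolding m2_def v23 l_def[symmetric] r_def[symmetric] by simp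
    have c2: "v'!2 + v'!3 \<le> 5*(v!2+v!3) + 68820"
      using wb l1 r1 unfolding v'_def v23 l_def[symmetric] r_def[symmetric] by simp
    show ?thesis using run rep c1 c2 by (intro exI[of _ "ia + ib + 1 + m2"] exI[of _ v']) simp
  next
    case Rgt
    obtain b \<beta>2 where b2: "\<beta>1 = b # \<beta>2" using b1 by (metis list.exhaust)
    have rq: "r = ycode b + 5 * rho \<beta>2" by (simp add: r_def b2 rho_Cons)
    have yb: "ycode b < 5" using ycode_bounds[of b] by simp
    have rm: "r mod 5 = ycode b" and rd: "r div 5 = rho \<beta>2" using rq yb by auto
    define m2 where "m2 = 6*l + ycode w + 2*(r div 5) + r mod 5 + 6"
    define v' where "v' = [r mod 5, scode u', 5*l+ycode w, r div 5, 1,0,0,0,0,0,0,0,0,0]"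
    have mv: "vrun [ycode w, scode u', l, r, 0, 1, 1, 0,0,0,0,0,0,0] m2 = Some v'"
      unfolding m2_def v'_def by (rule move_right)
    have run: "vrun v (ia + ib + 1 + m2) = Some v'"
      by (rule vrun_seq[OF vb_run]) (use mv Rgt in simp)
    have tm: "tm_step C = (u', T(h := w), h + 1)" using dl Th Rgt C by simp
    have wd2: "weak_decomp (T(h := w)) (h + 1) (\<alpha>1 @ [w]) b \<beta>2"
      using wd1 b2 wd_right by blast
    have rep: "vrep v' (tm_step C)"
      unfolding tm vrep_def prod.case
      by (rule exI[of _ "\<alpha>1 @ [w]"], rule exI[of _ b], rule exI[of _ \<beta>2]) (use wd2 in \<open>simp add: v'_def rm rd lam_snoc l_def\<close>)
    have c1: "ia + ib + 1 + m2 \<le> 6*(v!2+v!3) + 82600"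
      using ia ib wb l1 r1 unfolding m2_def v23 l_def[symmetric] r_def[symmetric] by simp
    have c2: "v'!2 + v'!3 \<le> 5*(v!2+v!3) + 68820"
      using wb l1 r1 unfolding v'_def v23 l_def[symmetric] r_def[symmetric] by simp
    show ?thesis using run rep c1 c2 by (intro exI[of _ "ia + ib + 1 + m2"] exI[of _ v']) simp
  qed
qed




definition macroP :: "nat list \<Rightarrow> config \<Rightarrow> nat \<times> nat list \<Rightarrow> bool" where
  "macroP v C mv \<longleftrightarrow> (case mv of (m, v') \<Rightarrow> vrun v m = Some v' \<and> vrep v' (tm_step C) \<and> 1 \<le> m
     \<and> m \<le> 6*(v!2+v!3) + 82600 \<and> v'!2 + v'!3 \<le> 5*(v!2+v!3) + 68820)"

definition macro_of :: "nat list \<Rightarrow> config \<Rightarrow> nat \<times> nat list" where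
  "macro_of v C = (SOME mv. macroP v C mv)"

lemma macro_of: "vrep v C \<Longrightarrow> macroP v C (macro_of v C)"
  unfolding macro_of_def
  by (rule someI_ex) (use macro in \<open>auto simp: macroP_def\<close>)

fun seqv :: "nat list \<Rightarrow> config \<Rightarrow> nat \<Rightarrow> nat list" where
  "seqv v C 0 = v"
| "seqv v C (Suc k) = snd (macro_of (seqv v C k) ((tm_step ^^ k) C))"

fun seqn :: "nat list \<Rightarrow> config \<Rightarrow> nat \<Rightarrow> nat" where
  "seqn v C 0 = 0"
| "seqn v C (Suc k) = seqn v C k + fst (macro_of (seqv v C k) ((tm_step ^^ k) C))"

lemma seq_inv:
  assumes "vrep v C"
  defines "D \<equiv> v!2 + v!3 + 17205"
  shows "vrep (seqv v C k) ((tm_step ^^ k) C) \<and> vrun v (seqn v C k) = Some (seqv v C k)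
     \<and> seqv v C k ! 2 + seqv v C k ! 3 + 17205 \<le> 5^k * D
     \<and> seqn v C k \<le> k * 5^k * (6*D + 82600) \<and> k \<le> seqn v C k
     \<and> seqn v C k < seqn v C (Suc k)"
proof (induction k)
  case 0
  have "macroP v C (macro_of v C)" using assms(1) by (rule macro_of)
  then show ?case using assms(1) by (auto simp: D_def macroP_def split: prod.splits)
next
  case (Suc k)
  let ?v = "seqv v C k" and ?C = "(tm_step ^^ k) C"
  obtain m v' where mo: "macro_of ?v ?C = (m, v')" by (cases "macro_of ?v ?C")
  have P: "macroP ?v ?C (m, v')" using macro_of[of ?v ?C] Suc.IH mo by simp
  then have run: "vrun ?v m = Some v'" and rep: "vrep v' (tm_step ?C)" and m1: "1 \<le> m"
    and mb: "m \<le> 6*(?v!2+?v!3) + 82600" and sb: "v'!2 + v'!3 \<le> 5*(?v!2+?v!3) + 68820"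
    by (auto simp: macroP_def)
  have sv: "seqv v C (Suc k) = v'" and sn: "seqn v C (Suc k) = seqn v C k + m" using mo by simp_all
  let ?S = "?v!2+?v!3"
  have S: "?S + 17205 \<le> 5^k * D" using Suc.IH by simp
  have rep': "vrep (seqv v C (Suc k)) ((tm_step ^^ Suc k) C)" using rep sv by simp
  have run': "vrun v (seqn v C (Suc k)) = Some (seqv v C (Suc k))"
    using vrun_seq[of v "seqn v C k" ?v m v'] Suc.IH run sv sn by simp
  have b1: "v'!2 + v'!3 + 17205 \<le> 5^(Suc k) * D" using S sb by simp
  have "m \<le> 5^k * (6*D + 82600)"
  proof -
    have "?S \<le> 5^k * D" using S by simp
    then have "6 * ?S \<le> 6 * (5^k * D)" by simp
    then have "m \<le> 6 * (5^k * D) + 82600" using mb by linarith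
    also have "82600 \<le> 5^k * (82600::nat)" by simp
    then have "6 * (5^k * D) + 82600 \<le> 5^k * (6*D + 82600)" by (simp add: algebra_simps)
    finally show ?thesis .
  qed
  then have "seqn v C (Suc k) \<le> k * 5^k * (6*D + 82600) + 5^k * (6*D + 82600)"
    using Suc.IH sn by simp
  also have "\<dots> = Suc k * 5^k * (6*D + 82600)" by (simp add: algebra_simps)
  also have "\<dots> \<le> Suc k * 5^(Suc k) * (6*D + 82600)" by simp
  finally have b2: "seqn v C (Suc k) \<le> Suc k * 5^(Suc k) * (6*D + 82600)" .
  have b3: "Suc k \<le> seqn v C (Suc k)" using Suc.IH sn m1 by simp
  obtain m' v'' where mo2: "macro_of (seqv v C (Suc k)) ((tm_step ^^ Suc k) C) = (m', v'')"
    by (cases "macro_of (seqv v C (Suc k)) ((tm_step ^^ Suc k) C)")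
  have "macroP (seqv v C (Suc k)) ((tm_step ^^ Suc k) C) (m', v'')"
    using macro_of[OF rep'] mo2 by simp
  then have "1 \<le> m'" by (simp add: macroP_def)
  then have b4: "seqn v C (Suc k) < seqn v C (Suc (Suc k))" using mo2 by simp
  show ?case using rep' run' b1 b2 b3 b4 sv by simp
qed

lemma vstep_bound: "vstep v = Some v' \<Longrightarrow> length v' = 14 \<and> (\<forall>i<14. v'!i \<le> v!i + 13596)"
proof -
  assume s: "vstep v = Some v'"
  then obtain xs where f: "find (\<lambda>xs. vfirable xs v) VUPN = Some xs" and v': "v' = vfire xs v"
    by (auto simp: vstep_def split: option.splits)
  have xs: "xs \<in> set VUPN" using f by (auto simp: find_Some_iff)
  have ok: "\<forall>(p,a,b)\<in>set xs. b \<le> 13596" using VUPN_ok xs by blast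
  have "\<forall>i<14. v'!i \<le> v!i + 13596"
  proof (intro allI impI)
    fix i :: nat assume i: "i < 14"
    have n: "[0..<14::nat] ! i = i" using i by simp
    have e: "v'!i = (case map_of xs (Suc i) of None \<Rightarrow> v!i
      | Some (a,b) \<Rightarrow> v!i - (if a>0 then nat a else 0) + b)"
      using i unfolding v' vfire_def L14 by (simp add: n split: option.split)
    show "v'!i \<le> v!i + 13596"
    proof (cases "map_of xs (Suc i)")
      case None then show ?thesis using e by simp
    next
      case (Some ab)
      obtain a b where ab: "ab = (a,b)" by (cases ab)
      have "(Suc i, a, b) \<in> set xs" using Some ab by (simp add: map_of_SomeD)
      then have "b \<le> 13596" using ok by auto
      then show ?thesis using e Some ab by simp
    qed
  qed
  then show ?thesis using v' by simp
qed

lemma vrun_bound: "length v = 14 \<Longrightarrow> vrun v j = Some v' \<Longrightarrow> length v' = 14 \<and> (\<forall>i<14. v'!i \<le> v!i + 13596 * j)"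
proof (induction j arbitrary: v')
  case 0 then show ?case by simp
next
  case (Suc j)
  obtain w where w: "vrun v j = Some w" and s: "vstep w = Some v'"
    using Suc.prems by (auto split: option.splits)
  have "length w = 14 \<and> (\<forall>i<14. w!i \<le> v!i + 13596 * j)" using Suc.IH[OF Suc.prems(1) w] .
  moreover have "length v' = 14 \<and> (\<forall>i<14. v'!i \<le> w!i + 13596)" using vstep_bound[OF s] .
  ultimately show ?case by fastforce
qed

lemma vrun_None_mono: "vrun v a = None \<Longrightarrow> a \<le> b \<Longrightarrow> vrun v b = None"
  using vrun_add[of v a "b - a"] by simp

lemma digits5_bound: "m < 5^d \<Longrightarrow> 1 \<le> d \<Longrightarrow> digits5 m \<le> d"
proof (induction d arbitrary: m)
  case 0 then show ?case by simp
next
  case (Suc d)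
  show ?case
  proof (cases "m < 5")
    case True then show ?thesis by (subst digits5.simps) simp
  next
    case False
    then have d: "1 \<le> d" using Suc.prems(1) by (cases d) auto
    have "m div 5 < 5^d" using Suc.prems(1) by (simp add: div_less_iff_less_mult mult.commute)
    then have "digits5 (m div 5) \<le> d" using Suc.IH d by blast
    then show ?thesis using False by (subst digits5.simps) simp
  qed
qed

lemma vec_expand: "vec M = [M 1, M 2, M 3, M 4, M 5, M 6, M 7, M 8, M 9, M 10, M 11, M 12, M 13, M 14]"
  by (simp add: vec_def L14[symmetric] eval_nat_numeral)

lemma ball_6_14: "(\<forall>p\<in>{6..14::nat}. P p) \<longleftrightarrow> P 6 \<and> P 7 \<and> P 8 \<and> P 9 \<and> P 10 \<and> P 11 \<and> P 12 \<and> P 13 \<and> P 14"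
proof -
  have "{6..14::nat} = {6,7,8,9,10,11,12,13,14}" by auto
  then show ?thesis by simp
qed

lemma rep_vrep: "represents M C \<longleftrightarrow> vrep (vec M) C"
  unfolding represents_def vrep_def vec_expand ball_6_14
  by (simp add: pX_def pU_def pL_def pR_def pSTEP_def split: prod.splits) (auto)




lemma map_option_Some: "map_option f X = Some y \<Longrightarrow> \<exists>M. X = Some M \<and> f M = y"
  by (cases X) auto

lemma big_bound:
  fixes A B k :: nat
  assumes "1 \<le> k" "x \<le> A + B * (k * 5^k)"
  shows "x < 5^(2*k + A + B)"
proof -
  have k5: "k \<le> 5^k" using power_gt_expt[of 5 k] by simp
  have p: "1 \<le> k * 5^k" using assms(1) by simp
  have "A * 1 \<le> A * (k * 5^k)" using p by (rule mult_le_mono2)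
  then have "x \<le> A * (k * 5^k) + B * (k * 5^k)" using assms(2) by linarith
  also have "\<dots> = (A + B) * (k * 5^k)" by (simp add: algebra_simps)
  also have "\<dots> \<le> (A + B) * (5^k * 5^k)" using k5 by simp
  also have "\<dots> < 5^(A+B) * (5^k * 5^k)" using power_gt_expt[of 5 "A+B"] by simp
  also have "\<dots> = 5^(2*k + A + B)"
  proof -
    have k2: "(5::nat)^(2*k) = 5^k * 5^k" by (simp only: mult_2 power_add)
    have "(5::nat)^(2*k + A + B) = 5^(2*k) * 5^A * 5^B" by (simp only: power_add)
    then show ?thesis unfolding k2 by (simp add: power_add algebra_simps)
  qed
  finally show ?thesis .
qed

theorem theorem1:
  fixes C0 :: config and M0 :: marking
  assumes "weak_tape C0"
    and "represents M0 C0"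
  shows "(\<forall>j. dipn_run upn_places UPN M0 j \<noteq> None)
    \<and> (\<exists>n :: nat \<Rightarrow> nat. n 0 = 0 \<and> strict_mono n
        \<and> (\<forall>k. \<exists>M. dipn_run upn_places UPN M0 (n k) = Some M
                  \<and> represents M ((tm_step ^^ k) C0))
        \<and> (\<exists>c::nat. \<forall>k\<ge>1. n k \<le> c * k * 5 ^ k)
        \<and> (\<exists>c::nat. \<forall>k\<ge>1. \<forall>j\<le>n k. \<forall>M. dipn_run upn_places UPN M0 j = Some M
                  \<longrightarrow> (\<forall>p\<in>upn_places. digits5 (M p) \<le> c * k)))"
proof -
  define v0 where "v0 = vec M0"
  have rep0: "vrep v0 C0" using assms(2) rep_vrep v0_def by simp
  define D where "D = v0!2 + v0!3 + 17205"
  define E where "E = 6*D + 82600"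
  define n where "n = seqn v0 C0"
  have inv: "\<And>k. vrep (seqv v0 C0 k) ((tm_step ^^ k) C0) \<and> vrun v0 (n k) = Some (seqv v0 C0 k)
     \<and> n k \<le> k * 5^k * E \<and> k \<le> n k \<and> n k < n (Suc k)"
    using seq_inv[OF rep0] unfolding n_def E_def D_def by blast
  have rv: "\<And>j. map_option vec (dipn_run upn_places UPN M0 j) = vrun v0 j"
    unfolding v0_def by (rule run_vec)
  have P1: "\<forall>j. dipn_run upn_places UPN M0 j \<noteq> None"
  proof
    fix j
    have "vrun v0 j \<noteq> None"
    proof
      assume "vrun v0 j = None"
      then have "vrun v0 (n j) = None" using vrun_None_mono inv[of j] by blast
      then show False using inv[of j] by simp
    qed
    then show "dipn_run upn_places UPN M0 j \<noteq> None" using rv[of j] by auto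
  qed
  have P2: "n 0 = 0" by (simp add: n_def)
  have P3: "strict_mono n" unfolding strict_mono_Suc_iff using inv by blast
  have P4: "\<forall>k. \<exists>M. dipn_run upn_places UPN M0 (n k) = Some M \<and> represents M ((tm_step ^^ k) C0)"
  proof
    fix k
    have "map_option vec (dipn_run upn_places UPN M0 (n k)) = Some (seqv v0 C0 k)"
      using rv inv by simp
    then obtain M where M: "dipn_run upn_places UPN M0 (n k) = Some M" "vec M = seqv v0 C0 k"
      using map_option_Some by blast
    then show "\<exists>M. dipn_run upn_places UPN M0 (n k) = Some M \<and> represents M ((tm_step ^^ k) C0)"
      using inv[of k] rep_vrep by auto
  qed
  have P5: "\<forall>k\<ge>1. n k \<le> E * k * 5 ^ k"
    using inv by (simp add: algebra_simps)
  define A where "A = sum_list v0"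
  define B where "B = 13596 * E"
  have P6: "\<forall>k\<ge>1. \<forall>j\<le>n k. \<forall>M. dipn_run upn_places UPN M0 j = Some M
                  \<longrightarrow> (\<forall>p\<in>upn_places. digits5 (M p) \<le> (2 + A + B) * k)"
  proof (intro allI impI ballI)
    fix k j M p
    assume k: "1 \<le> k" and j: "j \<le> n k" and r: "dipn_run upn_places UPN M0 j = Some M"
      and p: "p \<in> upn_places"
    have p14: "p \<in> {1..14}" using p by (simp add: upn_places_def)
    have vr: "vrun v0 j = Some (vec M)" using rv[of j] r by simp
    have lv0: "length v0 = 14" by (simp add: v0_def)
    have i: "p - 1 < 14" using p14 by auto
    have "vec M ! (p-1) \<le> v0 ! (p-1) + 13596 * j" using vrun_bound[OF lv0 vr] i by blast
    moreover have "v0 ! (p-1) \<le> A" unfolding A_def using elem_le_sum_list[of "p-1" v0] i lv0 by simp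
    moreover have "13596 * j \<le> B * (k * 5^k)"
      using j inv[of k] unfolding B_def by (simp add: algebra_simps)
    ultimately have "M p \<le> A + B * (k * 5^k)" using vec_nth[OF p14, of M] by linarith
    then have "M p < 5^(2*k + A + B)" by (rule big_bound[OF k])
    then have "digits5 (M p) \<le> 2*k + A + B" by (rule digits5_bound) (use k in simp)
    also have "\<dots> \<le> (2 + A + B) * k"
    proof -
      have "(A+B)*1 \<le> (A+B)*k" using k by (rule mult_le_mono2)
      then show ?thesis by (simp add: algebra_simps)
    qed
    finally show "digits5 (M p) \<le> (2 + A + B) * k" .
  qed
  show ?thesis using P1 P2 P3 P4 P5 P6 by blast
qed


end
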